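(* Let $\star$ be a semistar operation on an integral domain $D$. Then $D^{[\star]}$ is $t$-linked to $(D,\star)$. If moreover $(D:_K D^\star)\ne(0)$, then the complete integral closure $\widetilde D$ of $D$ is $t$-linked to $(D,\star)$. In particular, the complete integral closure $\widetilde D$ of $D$ is always $t$-linked to $D$.
   Context: Let $D$ be an integral domain with quotient field $K$. $\overline{\mathbf F}(D)$ denotes the set of all nonzero $D$-submodules of $K$ and $\mathbf f(D)$ the set of nonzero finitely generated $D$-submodules of $K$. A semistar operation on $D$ is a map $\star:\overline{\mathbf F}(D)\to\overline{\mathbf F}(D)$, $E\mapsto E^\star$, such that for all $0\ne x\in K$ and $E,F\in\overline{\mathbf F}(D)$: (1) $(xE)^\star=xE^\star$; (2) $E\subseteq F\Rightarrow E^\star\subseteq F^\star$; (3) $E\subseteq E^\star$ and $(E^\star)^\star=E^\star$. $\star_f$ is defined by $E^{\star_f}=\bigcup\{F^\star:F\in\mathbf f(D),F\subseteq E\}$. $D^{[\star]}:=\bigcup\{(H^\star:_KH^\star): H\in\mathbf f(D)\}$ (an overring of $D$). The complete integral closure of $D$ is $\widetilde D=\bigcup\{(E:_KE): E$ a nonzero fractional ideal of $D\}$. For an overring $T$ of $D$ (a ring with $D\subseteq T\subseteq K$), $v_T$ is the semistar operation $E\mapsto (T:_K(T:_KE))$ on $T$ and $t_T:=(v_T)_f$. If $\star'$ is a semistar operation on $T$, $T$ is $(\star,\star')$-linked to $D$ if for every nonzero finitely generated ideal $F\subseteq D$ with $F^\star=D^\star$ one has $(FT)^{\star'}=T^{\star'}$.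 $T$ is $t$-linked to $(D,\star)$ if it is $(\star,t_T)$-linked to $D$, and $t$-linked to $D$ if it is $(t_D,t_T)$-linked to $D$. *)

theory Defs
  imports Main
begin

text \<open>Throughout, the quotient field K is the ambient field type 'k, and an
integral domain D is a subring of 'k whose fraction field is all of 'k.\<close>

definition subring :: "'k::field set \<Rightarrow> bool" where
  "subring R \<longleftrightarrow> 0 \<in> R \<and> 1 \<in> R \<and> (\<forall>x\<in>R. \<forall>y\<in>R. x + y \<in> R \<and> x - y \<in> R \<and> x * y \<in> R)"

definition quotient_field_is_UNIV :: "'k::field set \<Rightarrow> bool" where
  "quotient_field_is_UNIV D \<longleftrightarrow> (\<forall>x. \<exists>a\<in>D. \<exists>b\<in>D. b \<noteq> 0 \<and> x = a / b)"

definition submod :: "'k::field set \<Rightarrow> 'k set \<Rightarrow> bool" where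
  "submod R E \<longleftrightarrow> 0 \<in> E \<and> (\<forall>x\<in>E. \<forall>y\<in>E. x + y \<in> E) \<and> (\<forall>r\<in>R. \<forall>x\<in>E. r * x \<in> E)"

definition Fbar :: "'k::field set \<Rightarrow> 'k set set" where
  "Fbar R = {E. submod R E \<and> E \<noteq> {0}}"

definition rspan :: "'k::field set \<Rightarrow> 'k set \<Rightarrow> 'k set" where
  "rspan R S = {\<Sum>s\<in>S. a s * s | a. \<forall>s\<in>S. a s \<in> R}"

definition fgs :: "'k::field set \<Rightarrow> 'k set set" where
  "fgs R = {E. (\<exists>S. finite S \<and> E = rspan R S) \<and> E \<noteq> {0}}"

definition smul :: "'k::field \<Rightarrow> 'k set \<Rightarrow> 'k set" where
  "smul x E = (\<lambda>e. x * e) ` E"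

definition semistar :: "'k::field set \<Rightarrow> ('k set \<Rightarrow> 'k set) \<Rightarrow> bool" where
  "semistar R st \<longleftrightarrow>
     (\<forall>E\<in>Fbar R. st E \<in> Fbar R) \<and>
     (\<forall>x E. x \<noteq> 0 \<longrightarrow> E \<in> Fbar R \<longrightarrow> st (smul x E) = smul x (st E)) \<and>
     (\<forall>E\<in>Fbar R. \<forall>F\<in>Fbar R. E \<subseteq> F \<longrightarrow> st E \<subseteq> st F) \<and>
     (\<forall>E\<in>Fbar R. E \<subseteq> st E \<and> st (st E) = st E)"

definition colon :: "'k::field set \<Rightarrow> 'k set \<Rightarrow> 'k set" where
  "colon E F = {x. \<forall>f\<in>F. x * f \<in> E}"

definition finite_type :: "'k::field set \<Rightarrow> ('k set \<Rightarrow> 'k set) \<Rightarrow> 'k set \<Rightarrow> 'k set" where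
  "finite_type R st E = \<Union>{st F | F. F \<in> fgs R \<and> F \<subseteq> E}"

definition Dbracket :: "'k::field set \<Rightarrow> ('k set \<Rightarrow> 'k set) \<Rightarrow> 'k set" where
  "Dbracket D st = \<Union>{colon (st H) (st H) | H. H \<in> fgs D}"

definition fractional_ideal :: "'k::field set \<Rightarrow> 'k set \<Rightarrow> bool" where
  "fractional_ideal D E \<longleftrightarrow> E \<in> Fbar D \<and> (\<exists>d\<in>D. d \<noteq> 0 \<and> (\<forall>e\<in>E. d * e \<in> D))"

definition cic :: "'k::field set \<Rightarrow> 'k set" where
  "cic D = \<Union>{colon E E | E. fractional_ideal D E}"

definition v_op :: "'k::field set \<Rightarrow> 'k set \<Rightarrow> 'k set" where
  "v_op T E = colon T (colon T E)"

definition t_op :: "'k::field set \<Rightarrow> 'k set \<Rightarrow> 'k set" where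
  "t_op T = finite_type T (v_op T)"

definition prod_ext :: "'k::field set \<Rightarrow> 'k set \<Rightarrow> 'k set" where
  "prod_ext F T = {\<Sum>i<n. f i * t i | (n::nat) f t. \<forall>i<n. f i \<in> F \<and> t i \<in> T}"

definition linked :: "'k::field set \<Rightarrow> ('k set \<Rightarrow> 'k set) \<Rightarrow> 'k set \<Rightarrow> ('k set \<Rightarrow> 'k set) \<Rightarrow> bool" where
  "linked D st T st' \<longleftrightarrow>
     (\<forall>F. F \<in> fgs D \<and> F \<subseteq> D \<and> st F = st D \<longrightarrow> st' (prod_ext F T) = st' T)"

definition t_linked_star :: "'k::field set \<Rightarrow> ('k set \<Rightarrow> 'k set) \<Rightarrow> 'k set \<Rightarrow> bool" where
  "t_linked_star D st T \<longleftrightarrow> linked D st T (t_op T)"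

definition t_linked :: "'k::field set \<Rightarrow> 'k set \<Rightarrow> bool" where
  "t_linked D T \<longleftrightarrow> linked D (t_op D) T (t_op T)"

end

theory Submission
  imports Defs
begin

definition sp :: "'k::field set \<Rightarrow> 'k set \<Rightarrow> 'k set" where
  "sp R X = \<Inter>{M. submod R M \<and> X \<subseteq> M}"

lemma sp_submod: "submod R (sp R X)"
  unfolding sp_def submod_def by auto

lemma sp_sub: "X \<subseteq> sp R X" unfolding sp_def by auto

lemma sp_prod:
  assumes "a \<in> A" "b \<in> B" shows "a * b \<in> sp R {x * y | x y. x \<in> A \<and> y \<in> B}"
proof -
  have "a * b \<in> {x * y | x y. x \<in> A \<and> y \<in> B}" using assms by blast
  then show ?thesis by (rule subsetD[OF sp_sub])
qed

lemma sp_least: "submod R M \<Longrightarrow> X \<subseteq> M \<Longrightarrow> sp R X \<subseteq> M"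
  unfolding sp_def by auto

lemma submod_pre: "submod R N \<Longrightarrow> submod R {z. c * z \<in> N}"
  unfolding submod_def by (auto simp: distrib_left mult.left_commute)

lemma submod_zero: "submod R {0::'k::field}"
  unfolding submod_def by auto

lemma sp_nonzero:
  assumes "sp R X \<noteq> {0}" shows "\<exists>a\<in>X. a \<noteq> 0"
proof (rule ccontr)
  assume "\<not> ?thesis"
  then have "X \<subseteq> {0}" by auto
  then have "sp R X \<subseteq> {0}" using sp_least submod_zero by blast
  moreover have "0 \<in> sp R X" using sp_submod unfolding submod_def by blast
  ultimately show False using assms by auto
qed

lemma submod_sum:
  assumes "submod R M" "finite A" shows "(\<forall>i\<in>A. g i \<in> M) \<Longrightarrow> sum g A \<in> M"
  using assms(2)
proof (induction A rule: finite_induct)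
  case empty then show ?case using assms(1) by (simp add: submod_def)
next
  case (insert x A) then show ?case using assms(1) by (simp add: submod_def)
qed

lemma subring_submod: "subring R \<Longrightarrow> submod R R"
  unfolding subring_def submod_def by auto

lemma submod_diff:
  assumes "subring R" "submod R X" "a \<in> X" "b \<in> X" shows "a - b \<in> X"
proof -
  have m1: "0 - 1 \<in> R" using assms(1) unfolding subring_def by blast
  then have "(0 - 1) * b \<in> X" using assms unfolding submod_def by blast
  then have "a + (0 - 1) * b \<in> X" using assms unfolding submod_def by blast
  then show ?thesis by simp
qed

lemma rspan_submod:
  assumes "subring R" shows "submod R (rspan R S)"
proof -
  have z: "0 \<in> R" using assms unfolding subring_def by blast
  have "0 \<in> rspan R S" unfolding rspan_def
    by (rule CollectI, rule exI[of _ "\<lambda>_. 0"]) (simp add: z)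
  moreover have "x + y \<in> rspan R S" if hx: "x \<in> rspan R S" and hy: "y \<in> rspan R S" for x y
  proof -
    obtain a where a: "x = (\<Sum>s\<in>S. a s * s)" "\<forall>s\<in>S. a s \<in> R" using hx unfolding rspan_def by blast
    obtain b where b: "y = (\<Sum>s\<in>S. b s * s)" "\<forall>s\<in>S. b s \<in> R" using hy unfolding rspan_def by blast
    have "x + y = (\<Sum>s\<in>S. (a s + b s) * s)" using a b by (simp add: sum.distrib distrib_right)
    moreover have "\<forall>s\<in>S. a s + b s \<in> R" using a b assms unfolding subring_def by blast
    ultimately show ?thesis unfolding rspan_def mem_Collect_eq
      by (intro exI[of _ "\<lambda>s. a s + b s"]) simp
  qed
  moreover have "r * x \<in> rspan R S" if hr: "r \<in> R" and hx: "x \<in> rspan R S" for r x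
  proof -
    obtain a where a: "x = (\<Sum>s\<in>S. a s * s)" "\<forall>s\<in>S. a s \<in> R" using hx unfolding rspan_def by blast
    have "r * x = (\<Sum>s\<in>S. (r * a s) * s)" using a by (simp add: sum_distrib_left mult.assoc)
    moreover have "\<forall>s\<in>S. r * a s \<in> R" using a assms hr unfolding subring_def by blast
    ultimately show ?thesis unfolding rspan_def mem_Collect_eq
      by (intro exI[of _ "\<lambda>s. r * a s"]) simp
  qed
  ultimately show ?thesis unfolding submod_def by blast
qed

lemma in_rspan:
  assumes "subring R" "finite S" "s \<in> S" shows "s \<in> rspan R S"
proof -
  have "(\<Sum>x\<in>S. (if x = s then 1 else 0) * x) = (\<Sum>x\<in>S. (if x = s then x else 0))"
    by (rule sum.cong) auto
  also have "\<dots> = s" using assms(2,3) by simp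
  finally have "(\<Sum>x\<in>S. (if x = s then 1 else 0) * x) = s" .
  moreover have "\<forall>x\<in>S. (if x = s then 1 else (0::'a)) \<in> R" using assms(1) unfolding subring_def by auto
  ultimately show ?thesis unfolding rspan_def mem_Collect_eq
    by (intro exI[of _ "\<lambda>x. if x = s then 1 else 0"]) simp
qed

lemma rspan_eq:
  assumes "subring R" "finite S" shows "rspan R S = sp R S"
proof
  show "sp R S \<subseteq> rspan R S"
    by (rule sp_least[OF rspan_submod[OF assms(1)]]) (use in_rspan[OF assms] in blast)
  show "rspan R S \<subseteq> sp R S"
  proof
    fix x assume "x \<in> rspan R S"
    then obtain a where a: "x = (\<Sum>s\<in>S. a s * s)" "\<forall>s\<in>S. a s \<in> R" unfolding rspan_def by blast
    have "x \<in> M" if "submod R M" "S \<subseteq> M" for M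
    proof -
      have "\<forall>s\<in>S. a s * s \<in> M" using a(2) that unfolding submod_def by blast
      then show ?thesis using submod_sum[OF that(1) assms(2)] a(1) by simp
    qed
    then show "x \<in> sp R S" unfolding sp_def by blast
  qed
qed

lemma Fbar_submod: "E \<in> Fbar R \<Longrightarrow> submod R E" unfolding Fbar_def by blast

lemma Fbar_nz: "E \<in> Fbar R \<Longrightarrow> \<exists>e\<in>E. e \<noteq> 0"
  unfolding Fbar_def submod_def by blast

lemma Fbar_0: "E \<in> Fbar R \<Longrightarrow> 0 \<in> E" unfolding Fbar_def submod_def by blast

lemma ss_parts:
  assumes "semistar D st"
  shows "\<forall>E\<in>Fbar D. st E \<in> Fbar D"
    "\<forall>x E. x \<noteq> 0 \<longrightarrow> E \<in> Fbar D \<longrightarrow> st (smul x E) = smul x (st E)"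
    "\<forall>E\<in>Fbar D. \<forall>F\<in>Fbar D. E \<subseteq> F \<longrightarrow> st E \<subseteq> st F"
    "\<forall>E\<in>Fbar D. E \<subseteq> st E \<and> st (st E) = st E"
  using assms[unfolded semistar_def]
  by (rule conjunct1, rule conjunct1[OF conjunct2], rule conjunct1[OF conjunct2[OF conjunct2]],
      rule conjunct2[OF conjunct2[OF conjunct2]])

lemma ss_Fbar: "semistar D st \<Longrightarrow> E \<in> Fbar D \<Longrightarrow> st E \<in> Fbar D"
  using ss_parts(1) by blast
lemma ss_smul: "semistar D st \<Longrightarrow> x \<noteq> 0 \<Longrightarrow> E \<in> Fbar D \<Longrightarrow> st (smul x E) = smul x (st E)"
  using ss_parts(2) by blast
lemma ss_mono: "semistar D st \<Longrightarrow> E \<in> Fbar D \<Longrightarrow> F \<in> Fbar D \<Longrightarrow> E \<subseteq> F \<Longrightarrow> st E \<subseteq> st F"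
  using ss_parts(3) by blast
lemma ss_ext: "semistar D st \<Longrightarrow> E \<in> Fbar D \<Longrightarrow> E \<subseteq> st E"
  using ss_parts(4) by blast
lemma ss_idem: "semistar D st \<Longrightarrow> E \<in> Fbar D \<Longrightarrow> st (st E) = st E"
  using ss_parts(4) by blast

lemma smul_Fbar:
  assumes "x \<noteq> 0" "E \<in> Fbar R" shows "smul x E \<in> Fbar R"
proof -
  have sm: "submod R E" using assms(2) by (rule Fbar_submod)
  have "submod R (smul x E)" unfolding submod_def smul_def
  proof (intro conjI ballI)
    have "0 \<in> E" using sm unfolding submod_def by blast
    then have "x * 0 \<in> (*) x ` E" by (rule imageI)
    then show "0 \<in> (*) x ` E" by simp
    fix a b assume "a \<in> (*) x ` E" "b \<in> (*) x ` E"
    then obtain a' b' where ab: "a = x * a'" "b = x * b'" "a' \<in> E" "b' \<in> E" by blast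
    then have "a' + b' \<in> E" using sm unfolding submod_def by blast
    then have "x * (a' + b') \<in> (*) x ` E" by (rule imageI)
    then show "a + b \<in> (*) x ` E" using ab(1,2) by (simp add: distrib_left)
  next
    fix r a assume r: "r \<in> R" and "a \<in> (*) x ` E"
    then obtain a' where a: "a = x * a'" "a' \<in> E" by blast
    then have "r * a' \<in> E" using sm r unfolding submod_def by blast
    then have "x * (r * a') \<in> (*) x ` E" by (rule imageI)
    then show "r * a \<in> (*) x ` E" using a(1) by (simp add: mult.left_commute)
  qed
  moreover obtain e where "e \<in> E" "e \<noteq> 0" using Fbar_nz[OF assms(2)] by blast
  then have "x * e \<in> smul x E" "x * e \<noteq> 0" using assms(1) unfolding smul_def by auto
  ultimately show ?thesis unfolding Fbar_def by blast
qed

lemma absorb: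
  assumes "semistar D st" "X \<in> Fbar D" "Y \<in> Fbar D" "X \<subseteq> st Y" shows "st X \<subseteq> st Y"
  using ss_mono[OF assms(1,2) ss_Fbar[OF assms(1,3)] assms(4)] ss_idem[OF assms(1,3)] by simp

lemma mult_absorb:
  assumes ss: "semistar D st" and x: "x \<noteq> 0" and E: "E \<in> Fbar D" and Y: "Y \<in> Fbar D"
    and h: "\<forall>e\<in>E. x * e \<in> st Y"
  shows "\<forall>e\<in>st E. x * e \<in> st Y"
proof -
  have "smul x E \<subseteq> st Y" using h unfolding smul_def by auto
  then have "st (smul x E) \<subseteq> st Y" using absorb[OF ss smul_Fbar[OF x E] Y] by blast
  then show ?thesis using ss_smul[OF ss x E] unfolding smul_def by auto
qed

lemma D_Fbar: "subring D \<Longrightarrow> D \<in> Fbar D"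
  unfolding Fbar_def using subring_submod[of D] unfolding subring_def by auto

lemma key:
  assumes ss: "semistar D st" and sr: "subring D" and F: "F = sp D S" "F \<in> Fbar D"
    and stF: "st F = st D" and H: "H \<in> Fbar D"
    and y: "\<forall>a\<in>S. \<forall>b\<in>H. y * a * b \<in> st H"
  shows "\<forall>e\<in>st H. y * e \<in> st H"
proof -
  define FH where "FH = sp D {a * b | a b. a \<in> S \<and> b \<in> H}"
  have FHsub: "submod D FH" by (simp add: FH_def sp_submod)
  have prod_in: "a * b \<in> FH" if "a \<in> S" "b \<in> H" for a b
    unfolding FH_def using that by (rule sp_prod)
  obtain a0 where a0: "a0 \<in> S" "a0 \<noteq> 0" using sp_nonzero[of D S] F unfolding Fbar_def by blast
  obtain h0 where h0: "h0 \<in> H" "h0 \<noteq> 0" using Fbar_nz[OF H] by blast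
  have FHF: "FH \<in> Fbar D" unfolding Fbar_def using FHsub prod_in[OF a0(1) h0(1)] a0 h0 by auto
  have stFH: "submod D (st FH)" using ss_Fbar[OF ss FHF] Fbar_submod by blast
  have stHs: "submod D (st H)" using ss_Fbar[OF ss H] Fbar_submod by blast
  have hF: "\<forall>f\<in>F. h * f \<in> FH" if "h \<in> H" for h
  proof -
    have "F \<subseteq> {z. h * z \<in> FH}" unfolding F(1)
      by (rule sp_least[OF submod_pre[OF FHsub]]) (use prod_in that in \<open>auto simp: mult.commute\<close>)
    then show ?thesis by blast
  qed
  have one: "1 \<in> st F" using stF ss_ext[OF ss D_Fbar[OF sr]] sr unfolding subring_def by auto
  have HstFH: "H \<subseteq> st FH"
  proof
    fix h assume h: "h \<in> H"
    show "h \<in> st FH"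
    proof (cases "h = 0")
      case True then show ?thesis using stFH unfolding submod_def by simp
    next
      case False
      have "\<forall>f\<in>F. h * f \<in> st FH" using hF[OF h] ss_ext[OF ss FHF] by blast
      then have "\<forall>e\<in>st F. h * e \<in> st FH" using mult_absorb[OF ss False F(2) FHF] by blast
      then show ?thesis using one by force
    qed
  qed
  have stH: "st H \<subseteq> st FH" using absorb[OF ss H FHF HstFH] .
  show ?thesis
  proof (cases "y = 0")
    case True then show ?thesis using stHs unfolding submod_def by simp
  next
    case False
    have "FH \<subseteq> {z. y * z \<in> st H}" unfolding FH_def
      by (rule sp_least[OF submod_pre[OF stHs]]) (use y in \<open>auto simp: mult.assoc\<close>)
    then have "\<forall>e\<in>st FH. y * e \<in> st H" using mult_absorb[OF ss False FHF H] ss_ext[OF ss FHF] by blast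
    then show ?thesis using stH by blast
  qed
qed

lemma dir_br:
  assumes ss: "semistar D st" and sr: "subring D"
    and H1: "H1 = sp D S1" "H1 \<in> Fbar D" and H2: "sp D S2 \<in> Fbar D"
    and x: "x \<in> colon (st H1) (st H1)"
  shows "x \<in> colon (st (sp D {a * b | a b. a \<in> S1 \<and> b \<in> S2})) (st (sp D {a * b | a b. a \<in> S1 \<and> b \<in> S2}))"
proof -
  define H3 where "H3 = sp D {a * b | a b. a \<in> S1 \<and> b \<in> S2}"
  have H3sub: "submod D H3" by (simp add: H3_def sp_submod)
  have prod_in: "a * b \<in> H3" if "a \<in> S1" "b \<in> S2" for a b
    unfolding H3_def using that by (rule sp_prod)
  obtain a0 where a0: "a0 \<in> S1" "a0 \<noteq> 0" using sp_nonzero[of D S1] H1 unfolding Fbar_def by blast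
  obtain b0 where b0: "b0 \<in> S2" "b0 \<noteq> 0" using sp_nonzero[of D S2] H2 unfolding Fbar_def by blast
  have H3F: "H3 \<in> Fbar D" unfolding Fbar_def using H3sub prod_in[OF a0(1) b0(1)] a0 b0 by auto
  have stH3: "submod D (st H3)" using ss_Fbar[OF ss H3F] Fbar_submod by blast
  have bH1: "\<forall>h\<in>H1. b * h \<in> H3" if "b \<in> S2" for b
  proof -
    have "H1 \<subseteq> {z. b * z \<in> H3}" unfolding H1(1)
      by (rule sp_least[OF submod_pre[OF H3sub]]) (use prod_in that in \<open>auto simp: mult.commute\<close>)
    then show ?thesis by blast
  qed
  have bst: "\<forall>e\<in>st H1. b * e \<in> st H3" if "b \<in> S2" "b \<noteq> 0" for b
    using mult_absorb[OF ss that(2) H1(2) H3F] bH1[OF that(1)] ss_ext[OF ss H3F] by blast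
  have "x \<in> colon (st H3) (st H3)"
  proof (cases "x = 0")
    case True then show ?thesis using stH3 unfolding submod_def colon_def by simp
  next
    case False
    have xa: "x * a \<in> st H1" if "a \<in> S1" for a
    proof -
      have "a \<in> H1" using that sp_sub[of S1 D] H1(1) by blast
      then have "a \<in> st H1" using ss_ext[OF ss H1(2)] by blast
      then show ?thesis using x unfolding colon_def by blast
    qed
    have "sp D {a * b | a b. a \<in> S1 \<and> b \<in> S2} \<subseteq> {z. x * z \<in> st H3}"
    proof (rule sp_least[OF submod_pre[OF stH3]], safe)
      fix a b assume ab: "a \<in> S1" "b \<in> S2"
      show "x * (a * b) \<in> st H3"
      proof (cases "b = 0")
        case True then show ?thesis using stH3 unfolding submod_def by simp
      next
        case False
        have "b * (x * a) \<in> st H3" using bst[OF ab(2) False] xa[OF ab(1)] by blast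
        then show ?thesis by (simp add: ac_simps)
      qed
    qed
    then have "H3 \<subseteq> {z. x * z \<in> st H3}" by (simp only: H3_def[symmetric])
    then have "\<forall>e\<in>st H3. x * e \<in> st H3" using mult_absorb[OF ss False H3F H3F] by blast
    then show ?thesis unfolding colon_def by blast
  qed
  then show ?thesis unfolding H3_def .
qed

lemma prodset_comm: "{a * b | a b. a \<in> S2 \<and> b \<in> S1} = {a * b | a b. a \<in> S1 \<and> (b::'a::comm_monoid_mult) \<in> S2}"
proof (intro set_eqI iffI)
  fix z assume "z \<in> {a * b | a b. a \<in> S2 \<and> b \<in> S1}"
  then obtain a b where "z = a * b" "a \<in> S2" "b \<in> S1" by blast
  then have "z = b * a \<and> b \<in> S1 \<and> a \<in> S2" by (simp add: mult.commute)
  then show "z \<in> {a * b | a b. a \<in> S1 \<and> b \<in> S2}" by blast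
next
  fix z assume "z \<in> {a * b | a b. a \<in> S1 \<and> b \<in> S2}"
  then obtain a b where "z = a * b" "a \<in> S1" "b \<in> S2" by blast
  then have "z = b * a \<and> b \<in> S2 \<and> a \<in> S1" by (simp add: mult.commute)
  then show "z \<in> {a * b | a b. a \<in> S2 \<and> b \<in> S1}" by blast
qed

lemma colon_ring:
  assumes sr: "subring D" and X: "submod D X"
  shows "0 \<in> colon X X" "1 \<in> colon X X" "D \<subseteq> colon X X"
    "x \<in> colon X X \<Longrightarrow> y \<in> colon X X \<Longrightarrow> x + y \<in> colon X X"
    "x \<in> colon X X \<Longrightarrow> y \<in> colon X X \<Longrightarrow> x - y \<in> colon X X"
    "x \<in> colon X X \<Longrightarrow> y \<in> colon X X \<Longrightarrow> x * y \<in> colon X X"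
  using X submod_diff[OF sr X] unfolding colon_def submod_def
  by (auto simp: distrib_right left_diff_distrib mult.assoc)

lemma dunion:
  assumes ne: "Fam \<noteq> {}" and dir: "\<forall>A\<in>Fam. \<forall>B\<in>Fam. \<exists>C\<in>Fam. A \<union> B \<subseteq> C"
    and fin: "finite A"
  shows "A \<subseteq> \<Union>Fam \<Longrightarrow> \<exists>C\<in>Fam. A \<subseteq> C"
  using fin
proof (induction A rule: finite_induct)
  case empty then show ?case using ne by blast
next
  case (insert x A)
  then have xU: "x \<in> \<Union>Fam" and AU: "A \<subseteq> \<Union>Fam" by auto
  obtain C1 where C1: "C1 \<in> Fam" "x \<in> C1" using xU by blast
  obtain C2 where C2: "C2 \<in> Fam" "A \<subseteq> C2" using insert.IH AU by blast
  obtain C where C: "C \<in> Fam" "C1 \<union> C2 \<subseteq> C" using dir C1(1) C2(1) by blast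
  have "insert x A \<subseteq> C" using C(2) C1(2) C2(2) by blast
  then show ?case using C(1) by blast
qed

lemma dunion_subring:
  assumes sr: "subring D" and ne: "Fam \<noteq> {}"
    and fam: "\<forall>C\<in>Fam. \<exists>X. C = colon X X \<and> submod D X"
    and dir: "\<forall>A\<in>Fam. \<forall>B\<in>Fam. \<exists>C\<in>Fam. A \<union> B \<subseteq> C"
  shows "subring (\<Union>Fam) \<and> D \<subseteq> \<Union>Fam"
proof -
  obtain C0 where C0: "C0 \<in> Fam" using ne by blast
  then obtain X0 where X0: "C0 = colon X0 X0" "submod D X0" using fam by blast
  have "D \<subseteq> \<Union>Fam" using colon_ring(3)[OF sr X0(2)] X0(1) C0 by blast
  moreover have "0 \<in> \<Union>Fam" "1 \<in> \<Union>Fam" using colon_ring(1,2)[OF sr X0(2)] X0(1) C0 by blast+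
  moreover have "x + y \<in> \<Union>Fam \<and> x - y \<in> \<Union>Fam \<and> x * y \<in> \<Union>Fam" if "x \<in> \<Union>Fam" "y \<in> \<Union>Fam" for x y
  proof -
    have fxy: "finite {x, y}" by simp
    have sxy: "{x, y} \<subseteq> \<Union>Fam" using that by blast
    obtain C where C: "C \<in> Fam" "{x, y} \<subseteq> C" using dunion[OF ne dir fxy sxy] by blast
    then obtain X where X: "C = colon X X" "submod D X" using fam by blast
    show ?thesis using colon_ring(4-6)[OF sr X(2), of x y] X(1) C by blast
  qed
  ultimately show ?thesis unfolding subring_def by blast
qed

lemma rspan_one: "rspan T {1} = T"
proof (intro set_eqI iffI)
  fix x assume "x \<in> rspan T {1}"
  then obtain a where "x = (\<Sum>s\<in>{1}. a s * s)" "\<forall>s\<in>{1}. a s \<in> T" unfolding rspan_def by blast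
  then show "x \<in> T" by simp
next
  fix x assume "x \<in> T"
  then show "x \<in> rspan T {1}" unfolding rspan_def mem_Collect_eq
    by (intro exI[of _ "\<lambda>_. x"]) simp
qed

lemma v_op_sub:
  assumes "G \<subseteq> T" shows "v_op T G \<subseteq> T"
proof
  fix x assume "x \<in> v_op T G"
  moreover have "1 \<in> colon T G" using assms unfolding colon_def by auto
  ultimately have "x * 1 \<in> T" unfolding v_op_def colon_def by blast
  then show "x \<in> T" by simp
qed

lemma t_op_sub:
  assumes "E \<subseteq> T" shows "t_op T E \<subseteq> T"
proof
  fix x assume "x \<in> t_op T E"
  then obtain G where "G \<in> fgs T" "G \<subseteq> E" "x \<in> v_op T G" unfolding t_op_def finite_type_def by blast
  then show "x \<in> T" using v_op_sub[of G T] assms by blast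
qed

lemma t_op_sup:
  assumes "G \<in> fgs T" "G \<subseteq> E" "T \<subseteq> v_op T G" shows "T \<subseteq> t_op T E"
  using assms unfolding t_op_def finite_type_def by blast

lemma t_op_self:
  assumes one: "(1::'k::field) \<in> T" shows "t_op T T = T"
proof
  show "t_op T T \<subseteq> T" by (rule t_op_sub) simp
  have G: "rspan T {1} \<in> fgs T" unfolding fgs_def using rspan_one[of T] one by force
  have "T \<subseteq> v_op T T" unfolding v_op_def colon_def by (auto simp: mult.commute)
  then show "T \<subseteq> t_op T T" using t_op_sup[OF G] rspan_one[of T] by simp
qed

lemma link:
  assumes srT: "subring T" and sr: "subring D" and DT: "D \<subseteq> T" and fin: "finite S"
    and F: "F = rspan D S" "F \<noteq> {0}" and FD: "F \<subseteq> D"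
    and Q: "\<forall>y. (\<forall>s\<in>S. y * s \<in> T) \<longrightarrow> y \<in> T"
  shows "t_op T (prod_ext F T) = t_op T T"
proof -
  have one: "1 \<in> T" using srT unfolding subring_def by blast
  have Tm: "submod T T" using subring_submod[OF srT] .
  have PT: "prod_ext F T \<subseteq> T"
  proof
    fix x assume "x \<in> prod_ext F T"
    then obtain n :: nat and f t where x: "x = (\<Sum>i<n. f i * t i)" "\<forall>i<n. f i \<in> F \<and> t i \<in> T"
      unfolding prod_ext_def by blast
    have "\<forall>i\<in>{..<n}. f i * t i \<in> T" using x(2) FD DT srT unfolding subring_def by blast
    then show "x \<in> T" using submod_sum[OF Tm, of "{..<n}"] x(1) by simp
  qed
  have "t_op T (prod_ext F T) = T"
  proof
    show "t_op T (prod_ext F T) \<subseteq> T" using t_op_sub[OF PT] .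
    define G where "G = rspan T S"
    have SF: "S \<subseteq> F" using in_rspan[OF sr fin] F(1) by blast
    have SG: "S \<subseteq> G" using in_rspan[OF srT fin] G_def by blast
    obtain s0 where s0: "s0 \<in> S" "s0 \<noteq> 0" using sp_nonzero[of D S] F rspan_eq[OF sr fin] by auto
    have Gf: "G \<in> fgs T" unfolding fgs_def G_def using fin SG s0 G_def by blast
    have GP: "G \<subseteq> prod_ext F T"
    proof
      fix x assume "x \<in> G"
      then obtain a where a: "x = (\<Sum>s\<in>S. a s * s)" "\<forall>s\<in>S. a s \<in> T" unfolding G_def rspan_def by blast
      obtain h where h: "bij_betw h {0..<card S} S" using ex_bij_betw_nat_finite[OF fin] by blast
      have "x = (\<Sum>i\<in>{0..<card S}. a (h i) * h i)" using sum.reindex_bij_betw[OF h, of "\<lambda>s. a s * s"] a(1) by simp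
      also have "\<dots> = (\<Sum>i<card S. h i * a (h i))" by (simp add: atLeast0LessThan mult.commute)
      finally have x: "x = (\<Sum>i<card S. h i * a (h i))" .
      have hh: "\<forall>i<card S. h i \<in> F \<and> a (h i) \<in> T" using h a(2) SF unfolding bij_betw_def by auto
      show "x \<in> prod_ext F T" unfolding prod_ext_def mem_Collect_eq
        by (intro exI[of _ "card S"] exI[of _ h] exI[of _ "\<lambda>i. a (h i)"]) (use x hh in simp)
    qed
    have "T \<subseteq> v_op T G"
    proof
      fix w assume w: "w \<in> T"
      have "w * z \<in> T" if "z \<in> colon T G" for z
      proof -
        have "z \<in> T" using Q that SG unfolding colon_def by blast
        then show ?thesis using w srT unfolding subring_def by blast
      qed
      then show "w \<in> v_op T G" unfolding v_op_def colon_def by blast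
    qed
    then show "T \<subseteq> t_op T (prod_ext F T)" using t_op_sup[OF Gf GP] by blast
  qed
  then show ?thesis using t_op_self[OF one] by simp
qed

lemma frac_Fbar: "fractional_ideal D E \<Longrightarrow> E \<in> Fbar D"
  unfolding fractional_ideal_def by blast

lemma D_frac:
  assumes "subring D" shows "fractional_ideal D D"
proof -
  have "D \<in> Fbar D" using D_Fbar[OF assms] .
  moreover have "1 \<in> D" using assms unfolding subring_def by blast
  ultimately show ?thesis unfolding fractional_ideal_def
    by (intro conjI bexI[of _ 1]) auto
qed

lemma prodset_finite: "finite S1 \<Longrightarrow> finite S2 \<Longrightarrow> finite {a * b | a b. a \<in> S1 \<and> b \<in> S2}"
  using finite_image_set2[of "\<lambda>x. x \<in> S1" "\<lambda>y. y \<in> S2" "(*)"] by simp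

lemma prod_nz:
  assumes "sp D S1 \<in> Fbar D" "sp D S2 \<in> Fbar D"
  shows "sp D {a * b | a b. a \<in> S1 \<and> b \<in> S2} \<in> Fbar D"
proof -
  obtain a0 where a0: "a0 \<in> S1" "a0 \<noteq> 0" using sp_nonzero[of D S1] assms(1) unfolding Fbar_def by blast
  obtain b0 where b0: "b0 \<in> S2" "b0 \<noteq> 0" using sp_nonzero[of D S2] assms(2) unfolding Fbar_def by blast
  have "a0 * b0 \<in> sp D {a * b | a b. a \<in> S1 \<and> b \<in> S2}" using a0(1) b0(1) by (rule sp_prod)
  moreover have "a0 * b0 \<noteq> 0" using a0 b0 by simp
  ultimately have "sp D {a * b | a b. a \<in> S1 \<and> b \<in> S2} \<noteq> {0}" by blast
  then show ?thesis unfolding Fbar_def using sp_submod by blast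
qed

lemma fgs_sp:
  assumes "subring D" "H \<in> fgs D" shows "\<exists>S. finite S \<and> H = sp D S \<and> H \<in> Fbar D"
proof -
  obtain S where S: "finite S" "H = rspan D S" "H \<noteq> {0}" using assms(2) unfolding fgs_def by blast
  then have "H = sp D S" using rspan_eq[OF assms(1)] by blast
  moreover then have "H \<in> Fbar D" using S(3) sp_submod unfolding Fbar_def by blast
  ultimately show ?thesis using S(1) by blast
qed

lemma br_facts:
  assumes ss: "semistar D st" and sr: "subring D"
  shows "subring (Dbracket D st) \<and> D \<subseteq> Dbracket D st \<and>
    (\<forall>A. finite A \<longrightarrow> A \<subseteq> Dbracket D st \<longrightarrow> (\<exists>H. H \<in> fgs D \<and> A \<subseteq> colon (st H) (st H)))"
proof -
  define Fam where "Fam = {colon (st H) (st H) | H. H \<in> fgs D}"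
  have T: "Dbracket D st = \<Union>Fam" unfolding Fam_def Dbracket_def by simp
  have one: "rspan D {1} \<in> fgs D" unfolding fgs_def using rspan_one[of D] sr unfolding subring_def by force
  have ne: "Fam \<noteq> {}" using one unfolding Fam_def by blast
  have fam: "\<forall>C\<in>Fam. \<exists>X. C = colon X X \<and> submod D X"
    unfolding Fam_def using fgs_sp[OF sr] ss_Fbar[OF ss] Fbar_submod by blast
  have dir: "\<forall>A\<in>Fam. \<forall>B\<in>Fam. \<exists>C\<in>Fam. A \<union> B \<subseteq> C"
  proof (intro ballI)
    fix A B assume "A \<in> Fam" "B \<in> Fam"
    then obtain H1 H2 where H: "A = colon (st H1) (st H1)" "B = colon (st H2) (st H2)" "H1 \<in> fgs D" "H2 \<in> fgs D"
      unfolding Fam_def by blast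
    obtain S1 where S1: "finite S1" "H1 = sp D S1" "H1 \<in> Fbar D" using fgs_sp[OF sr H(3)] by blast
    obtain S2 where S2: "finite S2" "H2 = sp D S2" "H2 \<in> Fbar D" using fgs_sp[OF sr H(4)] by blast
    define P where "P = {a * b | a b. a \<in> S1 \<and> b \<in> S2}"
    have P': "{a * b | a b. a \<in> S2 \<and> b \<in> S1} = P" unfolding P_def by (rule prodset_comm)
    have Pf: "finite P" unfolding P_def using prodset_finite S1 S2 by blast
    have PF: "sp D P \<in> Fbar D" unfolding P_def using prod_nz[of D S1 S2] S1 S2 by simp
    have "sp D P = rspan D P" using rspan_eq[OF sr Pf] by simp
    then have H3: "sp D P \<in> fgs D" unfolding fgs_def using Pf PF unfolding Fbar_def by blast
    have "A \<subseteq> colon (st (sp D P)) (st (sp D P))"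
      using dir_br[OF ss sr S1(2,3), of S2] S2 H(1) unfolding P_def by blast
    moreover have "B \<subseteq> colon (st (sp D P)) (st (sp D P))"
      using dir_br[OF ss sr S2(2,3), of S1] S1 H(2) P' by auto
    ultimately show "\<exists>C\<in>Fam. A \<union> B \<subseteq> C" using H3 unfolding Fam_def by blast
  qed
  have "\<exists>H. H \<in> fgs D \<and> A \<subseteq> colon (st H) (st H)" if "finite A" "A \<subseteq> Dbracket D st" for A
    using dunion[OF ne dir that(1)] that(2) T unfolding Fam_def by auto
  then show ?thesis using dunion_subring[OF sr ne fam dir] T by auto
qed

lemma dir_cic:
  assumes sr: "subring D" and E1: "fractional_ideal D E1" and E2: "fractional_ideal D E2"
  shows "fractional_ideal D (sp D {a * b | a b. a \<in> E1 \<and> b \<in> E2})"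
    "colon E1 E1 \<subseteq> colon (sp D {a * b | a b. a \<in> E1 \<and> b \<in> E2}) (sp D {a * b | a b. a \<in> E1 \<and> b \<in> E2})"
proof -
  define E3 where "E3 = sp D {a * b | a b. a \<in> E1 \<and> b \<in> E2}"
  have E3s: "submod D E3" unfolding E3_def by (rule sp_submod)
  have pin: "a * b \<in> E3" if "a \<in> E1" "b \<in> E2" for a b
    unfolding E3_def using that by (rule sp_prod)
  obtain a0 where a0: "a0 \<in> E1" "a0 \<noteq> 0" using Fbar_nz[OF frac_Fbar[OF E1]] by blast
  obtain b0 where b0: "b0 \<in> E2" "b0 \<noteq> 0" using Fbar_nz[OF frac_Fbar[OF E2]] by blast
  have E3F: "E3 \<in> Fbar D" unfolding Fbar_def using E3s pin[OF a0(1) b0(1)] a0 b0 by auto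
  obtain d1 where d1: "d1 \<in> D" "d1 \<noteq> 0" "\<forall>e\<in>E1. d1 * e \<in> D" using E1 unfolding fractional_ideal_def by blast
  obtain d2 where d2: "d2 \<in> D" "d2 \<noteq> 0" "\<forall>e\<in>E2. d2 * e \<in> D" using E2 unfolding fractional_ideal_def by blast
  have "E3 \<subseteq> {z. (d1 * d2) * z \<in> D}" unfolding E3_def
  proof (rule sp_least[OF submod_pre[OF subring_submod[OF sr]]], safe)
    fix a b assume "a \<in> E1" "b \<in> E2"
    then have "(d1 * a) * (d2 * b) \<in> D" using d1 d2 sr unfolding subring_def by blast
    then show "d1 * d2 * (a * b) \<in> D" by (simp add: ac_simps)
  qed
  moreover have "d1 * d2 \<in> D" "d1 * d2 \<noteq> 0" using d1 d2 sr unfolding subring_def by auto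
  ultimately show "fractional_ideal D (sp D {a * b | a b. a \<in> E1 \<and> b \<in> E2})"
    unfolding fractional_ideal_def E3_def[symmetric] using E3F by blast
  show "colon E1 E1 \<subseteq> colon (sp D {a * b | a b. a \<in> E1 \<and> b \<in> E2}) (sp D {a * b | a b. a \<in> E1 \<and> b \<in> E2})"
    unfolding E3_def[symmetric]
  proof
    fix x assume x: "x \<in> colon E1 E1"
    have "E3 \<subseteq> {z. x * z \<in> E3}" unfolding E3_def
    proof (rule sp_least[OF submod_pre[OF E3s[unfolded E3_def]]], safe)
      fix a b assume "a \<in> E1" "b \<in> E2"
      then have "(x * a) * b \<in> E3" using x pin unfolding colon_def by blast
      then show "x * (a * b) \<in> sp D {a * b | a b. a \<in> E1 \<and> b \<in> E2}" unfolding E3_def by (simp add: ac_simps)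
    qed
    then show "x \<in> colon E3 E3" unfolding colon_def by blast
  qed
qed

lemma cic_facts:
  assumes sr: "subring D"
  shows "subring (cic D) \<and> D \<subseteq> cic D \<and>
    (\<forall>A. finite A \<longrightarrow> A \<subseteq> cic D \<longrightarrow> (\<exists>E. fractional_ideal D E \<and> A \<subseteq> colon E E))"
proof -
  define Fam where "Fam = {colon E E | E. fractional_ideal D E}"
  have T: "cic D = \<Union>Fam" unfolding Fam_def cic_def by simp
  have ne: "Fam \<noteq> {}" using D_frac[OF sr] unfolding Fam_def by blast
  have fam: "\<forall>C\<in>Fam. \<exists>X. C = colon X X \<and> submod D X"
    unfolding Fam_def using frac_Fbar Fbar_submod by blast
  have dir: "\<forall>A\<in>Fam. \<forall>B\<in>Fam. \<exists>C\<in>Fam. A \<union> B \<subseteq> C"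
  proof (intro ballI)
    fix A B assume "A \<in> Fam" "B \<in> Fam"
    then obtain E1 E2 where H: "A = colon E1 E1" "B = colon E2 E2" "fractional_ideal D E1" "fractional_ideal D E2"
      unfolding Fam_def by blast
    define P where "P = {a * b | a b. a \<in> E1 \<and> b \<in> E2}"
    have P': "{a * b | a b. a \<in> E2 \<and> b \<in> E1} = P" unfolding P_def by (rule prodset_comm)
    have "fractional_ideal D (sp D P)" "A \<subseteq> colon (sp D P) (sp D P)"
      using dir_cic[OF sr H(3,4)] H(1) unfolding P_def by auto
    moreover have "B \<subseteq> colon (sp D P) (sp D P)" using dir_cic(2)[OF sr H(4,3)] H(2) P' by simp
    ultimately show "\<exists>C\<in>Fam. A \<union> B \<subseteq> C" unfolding Fam_def by blast
  qed
  have "\<exists>E. fractional_ideal D E \<and> A \<subseteq> colon E E" if "finite A" "A \<subseteq> cic D" for A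
    using dunion[OF ne dir that(1)] that(2) T unfolding Fam_def by auto
  then show ?thesis using dunion_subring[OF sr ne fam dir] T by auto
qed

lemma fgs_data:
  assumes sr: "subring D" and F: "F \<in> fgs D"
  obtains S where "finite S" "F = rspan D S" "F \<noteq> {0}" "F = sp D S" "F \<in> Fbar D"
proof -
  obtain S where S: "finite S" "F = rspan D S" "F \<noteq> {0}" using F unfolding fgs_def by blast
  then have "F = sp D S" using rspan_eq[OF sr] by blast
  moreover then have "F \<in> Fbar D" using S sp_submod unfolding Fbar_def by blast
  ultimately show ?thesis using that S by blast
qed

lemma part1:
  assumes sr: "subring D" and ss: "semistar D st"
  shows "t_linked_star D st (Dbracket D st)"
  unfolding t_linked_star_def linked_def
proof (intro allI impI, elim conjE)
  fix F assume Ff: "F \<in> fgs D" and FD: "F \<subseteq> D" and stF: "st F = st D"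
  obtain S where S: "finite S" "F = rspan D S" "F \<noteq> {0}" "F = sp D S" "F \<in> Fbar D"
    using fgs_data[OF sr Ff] by blast
  note br = br_facts[OF ss sr]
  have Q: "\<forall>y. (\<forall>s\<in>S. y * s \<in> Dbracket D st) \<longrightarrow> y \<in> Dbracket D st"
  proof (intro allI impI)
    fix y assume y: "\<forall>s\<in>S. y * s \<in> Dbracket D st"
    have "finite ((\<lambda>s. y * s) ` S)" "(\<lambda>s. y * s) ` S \<subseteq> Dbracket D st" using S(1) y by auto
    then obtain H where H: "H \<in> fgs D" "(\<lambda>s. y * s) ` S \<subseteq> colon (st H) (st H)" using br by blast
    have HF: "H \<in> Fbar D" using fgs_sp[OF sr H(1)] by blast
    have "\<forall>a\<in>S. \<forall>b\<in>H. y * a * b \<in> st H" using H(2) ss_ext[OF ss HF] unfolding colon_def by blast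
    then have "\<forall>e\<in>st H. y * e \<in> st H" using key[OF ss sr S(4,5) stF HF] by blast
    then have "y \<in> colon (st H) (st H)" unfolding colon_def by blast
    then show "y \<in> Dbracket D st" unfolding Dbracket_def using H(1) by blast
  qed
  show "t_op (Dbracket D st) (prod_ext F (Dbracket D st)) = t_op (Dbracket D st) (Dbracket D st)"
    using link[OF _ sr _ S(1,2,3) FD Q] br by blast
qed

lemma part2:
  assumes sr: "subring D" and ss: "semistar D st" and c: "colon D (st D) \<noteq> {0}"
  shows "t_linked_star D st (cic D)"
  unfolding t_linked_star_def linked_def
proof (intro allI impI, elim conjE)
  fix F assume Ff: "F \<in> fgs D" and FD: "F \<subseteq> D" and stF: "st F = st D"
  obtain S where S: "finite S" "F = rspan D S" "F \<noteq> {0}" "F = sp D S" "F \<in> Fbar D"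
    using fgs_data[OF sr Ff] by blast
  note cf = cic_facts[OF sr]
  have DF: "D \<in> Fbar D" using D_Fbar[OF sr] .
  have "0 \<in> colon D (st D)" using sr unfolding colon_def subring_def by simp
  then obtain c where c: "c \<in> colon D (st D)" "c \<noteq> 0" using c by blast
  have cD: "c \<in> D" using c(1) ss_ext[OF ss DF] sr unfolding colon_def subring_def by force
  have Q: "\<forall>y. (\<forall>s\<in>S. y * s \<in> cic D) \<longrightarrow> y \<in> cic D"
  proof (intro allI impI)
    fix y assume y: "\<forall>s\<in>S. y * s \<in> cic D"
    have "finite ((\<lambda>s. y * s) ` S)" "(\<lambda>s. y * s) ` S \<subseteq> cic D" using S(1) y by auto
    then obtain E where E: "fractional_ideal D E" "(\<lambda>s. y * s) ` S \<subseteq> colon E E" using cf by blast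
    have EF: "E \<in> Fbar D" using frac_Fbar[OF E(1)] .
    have "\<forall>a\<in>S. \<forall>b\<in>E. y * a * b \<in> st E" using E(2) ss_ext[OF ss EF] unfolding colon_def by blast
    then have "\<forall>e\<in>st E. y * e \<in> st E" using key[OF ss sr S(4,5) stF EF] by blast
    then have yc: "y \<in> colon (st E) (st E)" unfolding colon_def by blast
    obtain d where d: "d \<in> D" "d \<noteq> 0" "\<forall>e\<in>E. d * e \<in> D" using E(1) unfolding fractional_ideal_def by blast
    have "\<forall>e\<in>E. d * e \<in> st D" using d(3) ss_ext[OF ss DF] by blast
    then have "\<forall>e\<in>st E. d * e \<in> st D" using mult_absorb[OF ss d(2) EF DF] by blast
    then have "\<forall>e\<in>st E. (c * d) * e \<in> D" using c(1) unfolding colon_def by (simp add: mult.assoc)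
    moreover have "c * d \<in> D" "c * d \<noteq> 0" using cD d c(2) sr unfolding subring_def by auto
    ultimately have "fractional_ideal D (st E)" unfolding fractional_ideal_def using ss_Fbar[OF ss EF] by blast
    then show "y \<in> cic D" unfolding cic_def using yc by blast
  qed
  show "t_op (cic D) (prod_ext F (cic D)) = t_op (cic D) (cic D)"
    using link[OF _ sr _ S(1,2,3) FD Q] cf by blast
qed

lemma colon_submod: "subring D \<Longrightarrow> submod D (colon D X)"
  unfolding subring_def submod_def colon_def by (auto simp: distrib_right mult.assoc)

lemma part3:
  assumes sr: "subring D"
  shows "t_linked D (cic D)"
  unfolding t_linked_def linked_def
proof (intro allI impI, elim conjE)
  fix F assume Ff: "F \<in> fgs D" and FD: "F \<subseteq> D" and tF: "t_op D F = t_op D D"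
  obtain S where S: "finite S" "F = rspan D S" "F \<noteq> {0}" "F = sp D S" "F \<in> Fbar D"
    using fgs_data[OF sr Ff] by blast
  note cf = cic_facts[OF sr]
  have one: "(1::'a) \<in> D" using sr unfolding subring_def by blast
  then have "1 \<in> t_op D F" using tF t_op_self[OF one] by simp
  then obtain G where G: "G \<in> fgs D" "G \<subseteq> F" "1 \<in> v_op D G" unfolding t_op_def finite_type_def by blast
  have GD: "colon D G \<subseteq> D" using G(3) unfolding v_op_def colon_def by force
  have Q: "\<forall>y. (\<forall>s\<in>S. y * s \<in> cic D) \<longrightarrow> y \<in> cic D"
  proof (intro allI impI)
    fix y assume y: "\<forall>s\<in>S. y * s \<in> cic D"
    have "finite ((\<lambda>s. y * s) ` S)" "(\<lambda>s. y * s) ` S \<subseteq> cic D" using S(1) y by auto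
    then obtain E where E: "fractional_ideal D E" "(\<lambda>s. y * s) ` S \<subseteq> colon E E" using cf by blast
    have Es: "submod D E" using Fbar_submod[OF frac_Fbar[OF E(1)]] .
    have yF: "y * g * e \<in> E" if "g \<in> F" "e \<in> E" for g e
    proof -
      have "F \<subseteq> {z. (y * e) * z \<in> E}" unfolding S(4)
      proof (rule sp_least[OF submod_pre[OF Es]], safe)
        fix s assume "s \<in> S"
        then have "(y * s) * e \<in> E" using E(2) that(2) unfolding colon_def by blast
        then show "y * e * s \<in> E" by (simp add: ac_simps)
      qed
      then have "(y * e) * g \<in> E" using that(1) by blast
      then show ?thesis by (simp add: ac_simps)
    qed
    define E' where "E' = colon D (colon D E)"
    have "y * w \<in> E'" if w: "w \<in> E'" for w
    proof -
      have "y * w * z \<in> D" if z: "z \<in> colon D E" for z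
      proof -
      have "y * g * z \<in> colon D E" if "g \<in> G" for g
      proof -
        have "\<forall>e\<in>E. z * (y * g * e) \<in> D" using z yF G(2) that unfolding colon_def by blast
        then show ?thesis unfolding colon_def by (simp add: ac_simps)
      qed
      then have "\<forall>g\<in>G. w * (y * g * z) \<in> D" using w unfolding E'_def colon_def by blast
      then have "\<forall>g\<in>G. (y * g * z) * w \<in> D" by (simp add: ac_simps)
      then have "y * z * w \<in> colon D G" unfolding colon_def by (simp add: ac_simps)
      then have "y * z * w \<in> D" using GD by blast
      then show "y * w * z \<in> D" by (simp add: ac_simps)
      qed
      then show ?thesis unfolding E'_def colon_def[of D "colon D E"] by blast
    qed
    then have yc: "y \<in> colon E' E'" unfolding colon_def by blast
    obtain d where d: "d \<in> D" "d \<noteq> 0" "\<forall>e\<in>E. d * e \<in> D" using E(1) unfolding fractional_ideal_def by blast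
    have EE': "E \<subseteq> E'" unfolding E'_def colon_def by (auto simp: mult.commute)
    have dE: "d \<in> colon D E" using d(3) unfolding colon_def by (simp add: mult.commute)
    have "\<forall>w\<in>E'. d * w \<in> D" using dE unfolding E'_def colon_def by (simp add: mult.commute)
    moreover have "E' \<in> Fbar D"
    proof -
      have "submod D E'" unfolding E'_def by (rule colon_submod[OF sr])
      moreover obtain e where "e \<in> E" "e \<noteq> 0" using Fbar_nz[OF frac_Fbar[OF E(1)]] by blast
      then have "E' \<noteq> {0}" using EE' by blast
      ultimately show ?thesis unfolding Fbar_def by blast
    qed
    ultimately have "fractional_ideal D E'" unfolding fractional_ideal_def using d by blast
    then show "y \<in> cic D" unfolding cic_def using yc by blast
  qed
  show "t_op (cic D) (prod_ext F (cic D)) = t_op (cic D) (cic D)"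
    using link[OF _ sr _ S(1,2,3) FD Q] cf by blast
qed

theorem corollary3p6:
  fixes D :: "'k::field set" and st :: "'k set \<Rightarrow> 'k set"
  assumes "subring D" and "quotient_field_is_UNIV D" and "semistar D st"
  shows "t_linked_star D st (Dbracket D st)
    \<and> (colon D (st D) \<noteq> {0} \<longrightarrow> t_linked_star D st (cic D))
    \<and> t_linked D (cic D)"
  using part1[OF assms(1,3)] part2[OF assms(1,3)] part3[OF assms(1)] by blast

end
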